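(* Let $\mathcal{R}$ be a tolerance relation on $X=\{1,\dots,n\}$ with chordal graph $G(\mathcal{R})$ and set of maximal cliques $\mathcal{C}$, and let $\Phi:E(\mathcal{R})^d\to\bigoplus_{C\in\mathcal{C}}M_{|C|}(\mathbb{C})$, $(x_{ij})\mapsto((x_{ij})_{i,j\in C})_{C\in\mathcal{C}}$. Then the $C^*$-algebra generated by $\Phi(E(\mathcal{R})^d)$ is all of $\bigoplus_{C\in\mathcal{C}}M_{|C|}(\mathbb{C})$.
   Context: A tolerance relation on $X=\{1,\dots,n\}$ is a reflexive symmetric relation $\mathcal{R}\subseteq X\times X$; its graph $G(\mathcal{R})$ has vertex set $X$ and an edge between distinct $i,j$ iff $(i,j)\in\mathcal{R}$. A graph is chordal if every cycle of length at least 4 has a chord. $E(\mathcal{R})=\{(x_{ij})\in M_n(\mathbb{C})\mid x_{ij}=0\text{ if }(i,j)\notin\mathcal{R}\}$, and the dual operator system $E(\mathcal{R})^d$ is identified as a vector space with $E(\mathcal{R})$. Matrices in the $C$-component of the direct sum are indexed by $C$. *)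

theory Defs
  imports Complex_Main
begin

definition tolerance_relation :: "nat \<Rightarrow> (nat \<times> nat) set \<Rightarrow> bool" where
  "tolerance_relation n R \<longleftrightarrow>
     R \<subseteq> {1..n} \<times> {1..n} \<and> (\<forall>i\<in>{1..n}. (i, i) \<in> R) \<and> (\<forall>i j. (i, j) \<in> R \<longrightarrow> (j, i) \<in> R)"

definition adj :: "(nat \<times> nat) set \<Rightarrow> nat \<Rightarrow> nat \<Rightarrow> bool" where
  "adj R i j \<longleftrightarrow> i \<noteq> j \<and> (i, j) \<in> R"

definition is_cycle :: "nat \<Rightarrow> (nat \<times> nat) set \<Rightarrow> nat list \<Rightarrow> bool" where
  "is_cycle n R vs \<longleftrightarrow> length vs \<ge> 3 \<and> distinct vs \<and> set vs \<subseteq> {1..n} \<and>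
     (\<forall>i < length vs. adj R (vs ! i) (vs ! ((i + 1) mod length vs)))"

definition has_chord :: "(nat \<times> nat) set \<Rightarrow> nat list \<Rightarrow> bool" where
  "has_chord R vs \<longleftrightarrow> (\<exists>i < length vs. \<exists>j < length vs.
     j \<noteq> (i + 1) mod length vs \<and> i \<noteq> (j + 1) mod length vs \<and> i \<noteq> j \<and>
     adj R (vs ! i) (vs ! j))"

definition chordal :: "nat \<Rightarrow> (nat \<times> nat) set \<Rightarrow> bool" where
  "chordal n R \<longleftrightarrow> (\<forall>vs. is_cycle n R vs \<and> length vs \<ge> 4 \<longrightarrow> has_chord R vs)"

definition clique :: "nat \<Rightarrow> (nat \<times> nat) set \<Rightarrow> nat set \<Rightarrow> bool" where
  "clique n R C \<longleftrightarrow> C \<subseteq> {1..n} \<and> (\<forall>i\<in>C. \<forall>j\<in>C. i \<noteq> j \<longrightarrow> adj R i j)"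

definition maximal_cliques :: "nat \<Rightarrow> (nat \<times> nat) set \<Rightarrow> nat set set" where
  "maximal_cliques n R = {C. clique n R C \<and> (\<forall>D. clique n R D \<and> C \<subseteq> D \<longrightarrow> D = C)}"

text \<open>Matrices indexed by X are functions nat => nat => complex vanishing off X x X.
  E(R): those vanishing off R (R is contained in X x X).\<close>
definition E_rel :: "(nat \<times> nat) set \<Rightarrow> (nat \<Rightarrow> nat \<Rightarrow> complex) set" where
  "E_rel R = {x. \<forall>i j. (i, j) \<notin> R \<longrightarrow> x i j = 0}"

text \<open>Elements of the direct sum over C in Cs of M_|C|(C): families f with f C a
  matrix indexed by C x C (f C i j = 0 unless C in Cs and i, j in C).\<close>
type_synonym dsum = "nat set \<Rightarrow> nat \<Rightarrow> nat \<Rightarrow> complex"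

definition dsum_space :: "nat set set \<Rightarrow> dsum set" where
  "dsum_space Cs = {f. \<forall>C i j. \<not> (C \<in> Cs \<and> i \<in> C \<and> j \<in> C) \<longrightarrow> f C i j = 0}"

definition ds_add :: "dsum \<Rightarrow> dsum \<Rightarrow> dsum" where
  "ds_add f g = (\<lambda>C i j. f C i j + g C i j)"

definition ds_smult :: "complex \<Rightarrow> dsum \<Rightarrow> dsum" where
  "ds_smult c f = (\<lambda>C i j. c * f C i j)"

definition ds_mult :: "dsum \<Rightarrow> dsum \<Rightarrow> dsum" where
  "ds_mult f g = (\<lambda>C i j. \<Sum>k\<in>C. f C i k * g C k j)"

definition ds_adj :: "dsum \<Rightarrow> dsum" where
  "ds_adj f = (\<lambda>C i j. cnj (f C j i))"

text \<open>In the finite-dimensional setting this is norm closed, hence it is the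
  C*-algebra generated by S.\<close>
definition star_closed :: "dsum set \<Rightarrow> bool" where
  "star_closed A \<longleftrightarrow> (\<forall>f\<in>A. \<forall>g\<in>A. ds_add f g \<in> A) \<and> (\<forall>c. \<forall>f\<in>A. ds_smult c f \<in> A) \<and>
     (\<forall>f\<in>A. \<forall>g\<in>A. ds_mult f g \<in> A) \<and> (\<forall>f\<in>A. ds_adj f \<in> A)"

definition cstar_generated :: "dsum set \<Rightarrow> dsum set" where
  "cstar_generated S = \<Inter>{A. S \<subseteq> A \<and> star_closed A}"

definition Phi :: "nat set set \<Rightarrow> (nat \<Rightarrow> nat \<Rightarrow> complex) \<Rightarrow> dsum" where
  "Phi Cs x = (\<lambda>C i j. if C \<in> Cs \<and> i \<in> C \<and> j \<in> C then x i j else 0)"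

end

theory Submission
  imports Defs
begin

definition PP :: "nat set set \<Rightarrow> nat set \<Rightarrow> nat \<Rightarrow> nat \<Rightarrow> dsum" where
  "PP Cs S i j = (\<lambda>D a b. if D \<in> Cs \<and> S \<subseteq> D \<and> a = i \<and> b = j then 1 else 0)"

lemma PP_mult:
  assumes fin: "\<forall>D\<in>Cs. finite D" and k: "k \<in> S" "k \<in> T"
  shows "ds_mult (PP Cs S i k) (PP Cs T k j) = PP Cs (S \<union> T) i j"
proof (rule ext)+
  fix D a b
  show "ds_mult (PP Cs S i k) (PP Cs T k j) D a b = PP Cs (S \<union> T) i j D a b"
  proof (cases "D \<in> Cs \<and> S \<subseteq> D \<and> T \<subseteq> D \<and> a = i \<and> b = j")
    case True
    then have "finite D" "k \<in> D" using fin k by auto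
    have "ds_mult (PP Cs S i k) (PP Cs T k j) D a b = (\<Sum>l\<in>D. if l = k then 1 else 0)"
      unfolding ds_mult_def PP_def using True by (intro sum.cong) auto
    also have "\<dots> = 1" using \<open>finite D\<close> \<open>k \<in> D\<close> by simp
    finally show ?thesis using True unfolding PP_def by simp
  next
    case False
    have "ds_mult (PP Cs S i k) (PP Cs T k j) D a b = (\<Sum>l\<in>D. 0)"
      unfolding ds_mult_def PP_def using False by (intro sum.cong) auto
    then show ?thesis using False unfolding PP_def by auto
  qed
qed

lemma dsum_closed: "star_closed (dsum_space Cs)"
  unfolding star_closed_def dsum_space_def ds_add_def ds_smult_def ds_mult_def ds_adj_def
  by auto

theorem mainTheorem5:
  fixes n :: nat and R :: "(nat \<times> nat) set"
  assumes "tolerance_relation n R"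
    and "chordal n R"
  shows "cstar_generated (Phi (maximal_cliques n R) ` E_rel R) = dsum_space (maximal_cliques n R)"
proof -
  define Cs where "Cs = maximal_cliques n R"
  have tol: "R \<subseteq> {1..n} \<times> {1..n}" "\<And>i. i \<in> {1..n} \<Longrightarrow> (i, i) \<in> R"
    using assms(1) unfolding tolerance_relation_def by auto
  have Cs_sub: "\<And>C. C \<in> Cs \<Longrightarrow> C \<subseteq> {1..n}"
    unfolding Cs_def maximal_cliques_def clique_def by auto
  have fin: "\<forall>D\<in>Cs. finite D" using Cs_sub finite_subset by blast
  have "Phi Cs ` E_rel R \<subseteq> dsum_space Cs"
    unfolding Phi_def dsum_space_def by auto
  hence sub: "cstar_generated (Phi Cs ` E_rel R) \<subseteq> dsum_space Cs"
    unfolding cstar_generated_def using dsum_closed by blast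
  have sup: "dsum_space Cs \<subseteq> A" if A: "Phi Cs ` E_rel R \<subseteq> A" "star_closed A" for A
  proof -
    have add: "\<And>f g. f \<in> A \<Longrightarrow> g \<in> A \<Longrightarrow> ds_add f g \<in> A"
      and sm: "\<And>c f. f \<in> A \<Longrightarrow> ds_smult c f \<in> A"
      and mul: "\<And>f g. f \<in> A \<Longrightarrow> g \<in> A \<Longrightarrow> ds_mult f g \<in> A"
      using A(2) unfolding star_closed_def by auto
    have base: "PP Cs {i, j} i j \<in> A" if "C \<in> Cs" "i \<in> C" "j \<in> C" for C i j
    proof -
      have "(i, j) \<in> R"
      proof (cases "i = j")
        case True then have "j \<in> {1..n}" using Cs_sub that by blast
        then show ?thesis using tol(2) True by simp
      next
        case False then show ?thesis using that unfolding Cs_def maximal_cliques_def clique_def adj_def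
          by auto
      qed
      hence "(\<lambda>a b. if a = i \<and> b = j then (1::complex) else 0) \<in> E_rel R"
        unfolding E_rel_def by auto
      moreover have "Phi Cs (\<lambda>a b. if a = i \<and> b = j then (1::complex) else 0) = PP Cs {i, j} i j"
        unfolding Phi_def PP_def by (intro ext) auto
      ultimately show ?thesis using A(1) by (metis image_subset_iff)
    qed
    have ind: "\<forall>i\<in>C. \<forall>j\<in>C. PP Cs (insert i (insert j S)) i j \<in> A"
      if "C \<in> Cs" "finite S" "S \<subseteq> C" for C S
      using that(2,3)
    proof (induction S rule: finite_induct)
      case empty
      then show ?case using base[OF \<open>C \<in> Cs\<close>] by simp
    next
      case (insert k S)
      show ?case
      proof (intro ballI)
        fix i j assume ij: "i \<in> C" "j \<in> C"
        have k: "k \<in> C" using insert by auto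
        have "ds_mult (PP Cs {i, k} i k) (PP Cs (insert k (insert j S)) k j) \<in> A"
          using mul base[OF \<open>C \<in> Cs\<close> ij(1) k] insert ij k by auto
        moreover have "ds_mult (PP Cs {i, k} i k) (PP Cs (insert k (insert j S)) k j)
            = PP Cs ({i, k} \<union> insert k (insert j S)) i j"
          by (rule PP_mult[OF fin]) auto
        moreover have "{i, k} \<union> insert k (insert j S) = insert i (insert j (insert k S))" by auto
        ultimately show "PP Cs (insert i (insert j (insert k S))) i j \<in> A" by simp
      qed
    qed
    define U :: "nat set \<Rightarrow> nat \<Rightarrow> nat \<Rightarrow> dsum" where
      "U C0 i j = (\<lambda>D a b. if D = C0 \<and> a = i \<and> b = j then 1 else 0)" for C0 i j
    have unit: "U C i j \<in> A" if "C \<in> Cs" "i \<in> C" "j \<in> C" for C i j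
    proof -
      have "PP Cs (insert i (insert j C)) i j \<in> A"
        using ind[OF that(1) _ order_refl] fin that by auto
      moreover have "PP Cs (insert i (insert j C)) i j = U C i j"
      proof (intro ext)
        fix D a b
        have "D \<in> Cs \<and> C \<subseteq> D \<longleftrightarrow> D = C"
          using that(1) unfolding Cs_def maximal_cliques_def by auto
        then show "PP Cs (insert i (insert j C)) i j D a b = U C i j D a b"
          unfolding PP_def U_def using that by auto
      qed
      ultimately show ?thesis by simp
    qed
    have zero: "(\<lambda>D a b. 0) \<in> A"
    proof -
      have "(\<lambda>a b. 0) \<in> E_rel R" unfolding E_rel_def by auto
      moreover have "Phi Cs (\<lambda>a b. 0) = (\<lambda>D a b. 0)" unfolding Phi_def by auto
      ultimately show ?thesis using A(1) by (metis image_subset_iff)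
    qed
    define Tr where "Tr = {(C, i, j). C \<in> Cs \<and> i \<in> C \<and> j \<in> C}"
    have finTr: "finite Tr"
    proof (rule finite_subset)
      show "Tr \<subseteq> Pow {1..n} \<times> {1..n} \<times> {1..n}" unfolding Tr_def using Cs_sub by auto
    qed auto
    show ?thesis
    proof
      fix f assume f: "f \<in> dsum_space Cs"
      have "(\<lambda>D a b. if (D, a, b) \<in> T then f D a b else 0) \<in> A" if "finite T" "T \<subseteq> Tr" for T
        using that
      proof (induction T rule: finite_induct)
        case empty then show ?case using zero by simp
      next
        case (insert t T)
        obtain C i j where t: "t = (C, i, j)" by (cases t) auto
        have "ds_add (\<lambda>D a b. if (D, a, b) \<in> T then f D a b else 0) (ds_smult (f C i j) (U C i j)) \<in> A"
          using insert t unit sm add unfolding Tr_def by auto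
        moreover have "ds_add (\<lambda>D a b. if (D, a, b) \<in> T then f D a b else 0) (ds_smult (f C i j) (U C i j))
            = (\<lambda>D a b. if (D, a, b) \<in> insert t T then f D a b else 0)"
          unfolding ds_add_def ds_smult_def U_def t using insert(2) t by (intro ext) auto
        ultimately show ?case by simp
      qed
      from this[OF finTr order_refl]
      have "(\<lambda>D a b. if (D, a, b) \<in> Tr then f D a b else 0) \<in> A" .
      moreover have "(\<lambda>D a b. if (D, a, b) \<in> Tr then f D a b else 0) = f"
        using f unfolding dsum_space_def Tr_def by (intro ext) auto
      ultimately show "f \<in> A" by simp
    qed
  qed
  have "dsum_space Cs \<subseteq> cstar_generated (Phi Cs ` E_rel R)"
    unfolding cstar_generated_def using sup by blast
  with sub show ?thesis unfolding Cs_def by blast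
qed

end
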